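(* Let $C$ be a totally bounded subset of a metric space $(X,d)$ with II-modulus of total boundedness $\gamma$, $T:C\to C$ nonexpansive with $\mathrm{Fix}(T)\ne\emptyset$, $x\in C$, $x_n:=T^nx$, and assume $(x_n)$ is asymptotically regular with rate of asymptotic regularity $\Phi^{++}$. Then for all $k\in\mathbb{N}$ and $g:\mathbb{N}\to\mathbb{N}$ there exists $N\le\Theta:=\Theta_0(\gamma^M(4k+3))+K$ such that for all $i,j\in[N,N+g(N)]$ and all $m\ge N$: $d(x_i,x_j)\le\frac1{k+1}$ and $d(x_m,Tx_m)\le\frac1{k+1}$. Here $K=(\Phi^{++})^M(k)$, $\Theta_0(0)=0$ and $\Theta_0(n+1)=(\Phi^{++})^M\big((g^M(\Theta_0(n)+K)+K)(4k+4)\big)$.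
   Context: II-modulus $\gamma$ for $C$: for every $k$ and every sequence $(y_n)$ in $C$ there are $0\le i<j\le\gamma(k)$ with $d(y_i,y_j)\le\frac1{k+1}$. Nonexpansive: $d(Tx,Ty)\le d(x,y)$. A rate of asymptotic regularity is $\Phi^{++}:\mathbb{N}\to\mathbb{N}$ with $d(x_n,Tx_n)\le\frac1{k+1}$ for all $k$ and all $n\ge\Phi^{++}(k)$. For $f:\mathbb{N}\to\mathbb{N}$, $f^M(n):=\max\{f(i)\mid i\le n\}$. *)

theory Defs
  imports "HOL-Analysis.Analysis"
begin

definition II_modulus :: "'a::metric_space set \<Rightarrow> (nat \<Rightarrow> nat) \<Rightarrow> bool" where
  "II_modulus C \<gamma> \<longleftrightarrow>
     (\<forall>k. \<forall>y::nat \<Rightarrow> 'a. (\<forall>n. y n \<in> C) \<longrightarrow>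
        (\<exists>i j. i < j \<and> j \<le> \<gamma> k \<and> dist (y i) (y j) \<le> 1 / (real k + 1)))"

definition nonexpansive_on :: "'a::metric_space set \<Rightarrow> ('a \<Rightarrow> 'a) \<Rightarrow> bool" where
  "nonexpansive_on C T \<longleftrightarrow> T ` C \<subseteq> C \<and> (\<forall>x\<in>C. \<forall>y\<in>C. dist (T x) (T y) \<le> dist x y)"

definition rate_AR :: "(nat \<Rightarrow> 'a::metric_space) \<Rightarrow> ('a \<Rightarrow> 'a) \<Rightarrow> (nat \<Rightarrow> nat) \<Rightarrow> bool" where
  "rate_AR xs T \<Phi> \<longleftrightarrow> (\<forall>k n. \<Phi> k \<le> n \<longrightarrow> dist (xs n) (T (xs n)) \<le> 1 / (real k + 1))"

definition maxf :: "(nat \<Rightarrow> nat) \<Rightarrow> nat \<Rightarrow> nat" where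
  "maxf f n = Max (f ` {..n})"

fun Theta0 :: "(nat \<Rightarrow> nat) \<Rightarrow> (nat \<Rightarrow> nat) \<Rightarrow> nat \<Rightarrow> nat \<Rightarrow> nat" where
  "Theta0 \<Phi> g k 0 = 0"
| "Theta0 \<Phi> g k (Suc n) =
     maxf \<Phi> ((maxf g (Theta0 \<Phi> g k n + maxf \<Phi> k) + maxf \<Phi> k) * (4 * k + 4))"

end

theory Submission
  imports Defs
begin

lemma maxf_ge: "i \<le> n \<Longrightarrow> f i \<le> maxf f n"
  unfolding maxf_def by (rule Max_ge) auto

lemma maxf_mono: "m \<le> n \<Longrightarrow> maxf f m \<le> maxf f n"
  unfolding maxf_def by (rule Max_mono) auto

lemma Theta0_Suc_mono: "Theta0 P g k n \<le> Theta0 P g k (Suc n)"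
proof (induction n)
  case 0 then show ?case by simp
next
  case (Suc n)
  have "maxf g (Theta0 P g k n + maxf P k) \<le> maxf g (Theta0 P g k (Suc n) + maxf P k)"
    using Suc by (intro maxf_mono) simp
  then have "(maxf g (Theta0 P g k n + maxf P k) + maxf P k) * (4 * k + 4)
     \<le> (maxf g (Theta0 P g k (Suc n) + maxf P k) + maxf P k) * (4 * k + 4)"
    by simp
  then show ?case by (simp only: Theta0.simps) (rule maxf_mono)
qed

lemma Theta0_mono: "m \<le> n \<Longrightarrow> Theta0 P g k m \<le> Theta0 P g k n"
proof (induction n rule: dec_induct)
  case base then show ?case by simp
next
  case (step n) then show ?case using Theta0_Suc_mono[of P g k n] by linarith
qed

lemma iter_in: "nonexpansive_on C T \<Longrightarrow> x \<in> C \<Longrightarrow> (T ^^ n) x \<in> C"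
  by (induction n) (auto simp: nonexpansive_on_def)

lemma iter_ne: "nonexpansive_on C T \<Longrightarrow> a \<in> C \<Longrightarrow> b \<in> C \<Longrightarrow>
   dist ((T ^^ n) a) ((T ^^ n) b) \<le> dist a b"
proof (induction n)
  case 0 then show ?case by simp
next
  case (Suc n)
  have "dist ((T ^^ Suc n) a) ((T ^^ Suc n) b) \<le> dist ((T ^^ n) a) ((T ^^ n) b)"
    using Suc.prems iter_in[of C T a n] iter_in[of C T b n]
    by (auto simp: nonexpansive_on_def)
  then show ?case using Suc by linarith
qed

lemma shiftl: "(T^^(a+b)) x = (T^^b) ((T^^a) x)"
  by (metis funpow_add comp_apply add.commute)

lemma chain:
  fixes xs :: "nat \<Rightarrow> 'a::metric_space"
  assumes "\<forall>l\<ge>M. dist (xs l) (xs (Suc l)) \<le> e"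
  shows "dist (xs (M+s)) (xs (M+s+d)) \<le> real d * e"
proof (induction d)
  case 0 then show ?case by simp
next
  case (Suc d)
  have "dist (xs (M+s)) (xs (M+s+Suc d)) \<le> dist (xs (M+s)) (xs (M+s+d)) + dist (xs (M+s+d)) (xs (Suc (M+s+d)))"
    using dist_triangle by simp
  also have "\<dots> \<le> real d * e + e" using Suc assms by (intro add_mono) auto
  finally show ?case by (simp add: algebra_simps)
qed

theorem theorem7p8:
  fixes C :: "'a::metric_space set" and T :: "'a \<Rightarrow> 'a" and x :: 'a
    and \<gamma> \<Phi> :: "nat \<Rightarrow> nat"
  assumes "totally_bounded C"
    and "II_modulus C \<gamma>"
    and "nonexpansive_on C T"
    and "\<exists>p\<in>C. T p = p"
    and "x \<in> C"
    and "rate_AR (\<lambda>n. (T ^^ n) x) T \<Phi>"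
  shows "\<forall>(k::nat) (g::nat \<Rightarrow> nat).
           \<exists>N. N \<le> Theta0 \<Phi> g k (maxf \<gamma> (4 * k + 3)) + maxf \<Phi> k \<and>
             (\<forall>i j. N \<le> i \<and> i \<le> N + g N \<and> N \<le> j \<and> j \<le> N + g N \<longrightarrow>
                dist ((T ^^ i) x) ((T ^^ j) x) \<le> 1 / (real k + 1)) \<and>
             (\<forall>m\<ge>N. dist ((T ^^ m) x) (T ((T ^^ m) x)) \<le> 1 / (real k + 1))"
proof (intro allI)
  fix k :: nat and g :: "nat \<Rightarrow> nat"
  define xs where "xs = (\<lambda>n. (T ^^ n) x)"
  define K where "K = maxf \<Phi> k"
  define n where "n = (\<lambda>i. Theta0 \<Phi> g k i + K)"
  have inC: "\<And>m. xs m \<in> C" unfolding xs_def using iter_in assms(3,5) by blast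
  have xsS: "\<And>l. xs (Suc l) = T (xs l)" by (simp add: xs_def)
  have rate: "\<And>a l. \<Phi> a \<le> l \<Longrightarrow> dist (xs l) (xs (Suc l)) \<le> 1 / (real a + 1)"
    using assms(6) unfolding rate_AR_def xs_def by simp
  obtain i j where ij: "i < j" "j \<le> \<gamma> (4*k+3)"
    "dist (xs (n i)) (xs (n j)) \<le> 1 / (real (4*k+3) + 1)"
  proof -
    have "\<forall>m. (\<lambda>m. xs (n m)) m \<in> C" using inC by simp
    with assms(2) have "\<exists>i j. i < j \<and> j \<le> \<gamma> (4*k+3) \<and> dist (xs (n i)) (xs (n j)) \<le> 1 / (real (4*k+3) + 1)"
      unfolding II_modulus_def by (elim allE[of _ "4*k+3"] allE[of _ "\<lambda>m. xs (n m)"]) (simp add: inC)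
    then show ?thesis using that by blast
  qed
  define N where "N = n i"
  define a where "a = (maxf g (Theta0 \<Phi> g k i + K) + K) * (4 * k + 4)"
  have gN: "g N \<le> maxf g (Theta0 \<Phi> g k i + K)"
    unfolding N_def n_def by (rule maxf_ge) simp
  have "Theta0 \<Phi> g k (Suc i) \<le> Theta0 \<Phi> g k j" using ij by (intro Theta0_mono) simp
  moreover have "\<Phi> a \<le> Theta0 \<Phi> g k (Suc i)"
    unfolding a_def K_def by (simp only: Theta0.simps) (rule maxf_ge, simp)
  ultimately have Phia: "\<Phi> a \<le> n j" unfolding n_def by simp
  have ga: "real (g N) * (4 * k + 4) \<le> real a"
  proof -
    have "g N * (4*k+4) \<le> a" unfolding a_def using gN by (intro mult_right_mono) auto
    then show ?thesis by (metis of_nat_le_iff of_nat_mult of_nat_add of_nat_numeral of_nat_1)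
  qed
  have Kk: "\<Phi> k \<le> K" unfolding K_def by (rule maxf_ge) simp
  have Nn: "N \<le> n j" unfolding N_def n_def using ij by (simp add: Theta0_mono)
  have main: "dist (xs (N+s)) (xs (N+s+d)) \<le> 1 / (real k + 1)" if "d \<le> g N" for s d
  proof -
    have c1: "dist (xs (N+s)) (xs (n j + s)) \<le> 1 / (4 * real k + 4)"
    proof -
      have "dist (xs (N+s)) (xs (n j + s)) = dist ((T^^s) (xs N)) ((T^^s) (xs (n j)))"
        by (simp only: xs_def shiftl)
      also have "\<dots> \<le> dist (xs N) (xs (n j))" using iter_ne assms(3) inC by blast
      finally show ?thesis using ij(3) unfolding N_def by (simp add: algebra_simps)
    qed
    have c3: "dist (xs (N+s+d)) (xs (n j + s + d)) \<le> 1 / (4 * real k + 4)"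
    proof -
      have "dist (xs (N+s+d)) (xs (n j + s + d)) = dist ((T^^(s+d)) (xs N)) ((T^^(s+d)) (xs (n j)))"
        by (simp only: xs_def shiftl add.assoc)
      also have "\<dots> \<le> dist (xs N) (xs (n j))" using iter_ne assms(3) inC by blast
      finally show ?thesis using ij(3) unfolding N_def by (simp add: algebra_simps)
    qed
    have c2: "dist (xs (n j + s)) (xs (n j + s + d)) \<le> real d * (1 / (real a + 1))"
      by (rule chain) (use rate Phia in auto)
    have "real d * (1 / (real a + 1)) \<le> 1 / (4 * real k + 4)"
    proof -
      have "real d \<le> real (g N)" using that by simp
      then have "real d * (4 * k + 4) \<le> real a" using ga
        by (smt (verit) mult_right_mono of_nat_0_le_iff)
      then show ?thesis by (simp add: field_simps)
    qed
    with c2 have c2': "dist (xs (n j + s)) (xs (n j + s + d)) \<le> 1 / (4 * real k + 4)" by linarith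
    have "dist (xs (N+s)) (xs (N+s+d)) \<le> dist (xs (N+s)) (xs (n j + s)) + dist (xs (n j + s)) (xs (n j + s + d)) + dist (xs (N+s+d)) (xs (n j + s + d))"
    proof -
      have "dist (xs (N+s)) (xs (N+s+d)) \<le> dist (xs (N+s)) (xs (n j + s + d)) + dist (xs (n j + s + d)) (xs (N+s+d))"
        by (rule dist_triangle)
      moreover have "dist (xs (N+s)) (xs (n j + s + d)) \<le> dist (xs (N+s)) (xs (n j + s)) + dist (xs (n j + s)) (xs (n j + s + d))"
        by (rule dist_triangle)
      ultimately show ?thesis by (simp add: dist_commute)
    qed
    also have "\<dots> \<le> 3 / (4 * real k + 4)" using c1 c2' c3 by simp
    also have "\<dots> \<le> 1 / (real k + 1)" by (simp add: field_simps)
    finally show ?thesis .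
  qed
  show "\<exists>N. N \<le> Theta0 \<Phi> g k (maxf \<gamma> (4 * k + 3)) + maxf \<Phi> k \<and>
             (\<forall>i j. N \<le> i \<and> i \<le> N + g N \<and> N \<le> j \<and> j \<le> N + g N \<longrightarrow>
                dist ((T ^^ i) x) ((T ^^ j) x) \<le> 1 / (real k + 1)) \<and>
             (\<forall>m\<ge>N. dist ((T ^^ m) x) (T ((T ^^ m) x)) \<le> 1 / (real k + 1))"
  proof (intro exI conjI allI impI)
    have "i \<le> maxf \<gamma> (4*k+3)" using ij maxf_ge[of "4*k+3" "4*k+3" \<gamma>] by simp
    then show "N \<le> Theta0 \<Phi> g k (maxf \<gamma> (4 * k + 3)) + maxf \<Phi> k"
      unfolding N_def n_def K_def by (simp add: Theta0_mono)
  next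
    fix i' j' assume h: "N \<le> i' \<and> i' \<le> N + g N \<and> N \<le> j' \<and> j' \<le> N + g N"
    show "dist ((T ^^ i') x) ((T ^^ j') x) \<le> 1 / (real k + 1)"
    proof (cases "i' \<le> j'")
      case True
      have "dist (xs (N+(i'-N))) (xs (N+(i'-N)+(j'-i'))) \<le> 1 / (real k + 1)"
        by (rule main) (use h True in auto)
      then show ?thesis using h True by (simp add: xs_def)
    next
      case False
      have "dist (xs (N+(j'-N))) (xs (N+(j'-N)+(i'-j'))) \<le> 1 / (real k + 1)"
        by (rule main) (use h False in auto)
      then show ?thesis using h False by (simp add: xs_def dist_commute)
    qed
  next
    fix m assume "N \<le> m"
    then have "\<Phi> k \<le> m" using Kk unfolding N_def n_def by simp
    then show "dist ((T ^^ m) x) (T ((T ^^ m) x)) \<le> 1 / (real k + 1)"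
      using rate[of k m] by (simp add: xs_def)
  qed
qed

end
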